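(* Let $\mathcal{I}$ be an index set, $S$ a non-empty finite set, and $\emptyset\ne\mathcal{K}_\iota\subseteq S$ for $\iota\in\mathcal{I}$; define $\varepsilon_{i,j}=1$ if $\mathcal{K}_i\cap\mathcal{K}_j=\emptyset$ and $\varepsilon_{i,j}=0$ otherwise. Let $(\iota_1,\dots,\iota_k)\in I^\varepsilon_k$, and let $\sigma\in\tilde S_k$ be such that for every $s\in S$ the induced permutation $\sigma_s$ of $J_s$ describes a non-crossing partition of $J_s$. Then $\sigma$ has at least one fixed point.
   Context: $I^\varepsilon_k$ is the set of $(i_1,\dots,i_k)\in\mathcal{I}^k$ such that whenever $i_j=i_\ell$ with $j<\ell$ there is $m$ with $j<m<\ell$, $i_m\ne i_j$ and $\varepsilon_{i_ji_m}=0$. $\tilde S_k=\{\sigma\in S_k:\iota_{\sigma(j)}=\iota_j\text{ for all }j\}$. For $s\in S$, $J_s=\{j\in\{1,\dots,k\}:s\in\mathcal{K}_{\iota_j}\}$, which is preserved by every $\sigma\in\tilde S_k$; $\sigma_s$ is the restriction of $\sigma$ to $J_s$. A permutation describes a non-crossing partition if the partition into its cycles is non-crossing with respect to the natural order of $J_s$. *)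

theory Defs
  imports "HOL-Combinatorics.Permutations"
begin

text \<open>Tuples (iota_1,...,iota_k) are functions nat => 'i, positions 1..k.\<close>

definition eps :: "('i \<Rightarrow> 's set) \<Rightarrow> 'i \<Rightarrow> 'i \<Rightarrow> nat" where
  "eps K i j = (if K i \<inter> K j = {} then 1 else 0)"

definition I_eps :: "'i set \<Rightarrow> ('i \<Rightarrow> 's set) \<Rightarrow> nat \<Rightarrow> (nat \<Rightarrow> 'i) set" where
  "I_eps I K k = {\<iota>. (\<forall>j\<in>{1..k}. \<iota> j \<in> I) \<and>
     (\<forall>j l. 1 \<le> j \<and> j < l \<and> l \<le> k \<and> \<iota> j = \<iota> l \<longrightarrow>
        (\<exists>m. j < m \<and> m < l \<and> \<iota> m \<noteq> \<iota> j \<and> eps K (\<iota> j) (\<iota> m) = 0))}"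

definition S_tilde :: "nat \<Rightarrow> (nat \<Rightarrow> 'i) \<Rightarrow> (nat \<Rightarrow> nat) set" where
  "S_tilde k \<iota> = {\<sigma>. \<sigma> permutes {1..k} \<and> (\<forall>j\<in>{1..k}. \<iota> (\<sigma> j) = \<iota> j)}"

definition J_set :: "('i \<Rightarrow> 's set) \<Rightarrow> nat \<Rightarrow> (nat \<Rightarrow> 'i) \<Rightarrow> 's \<Rightarrow> nat set" where
  "J_set K k \<iota> s = {j\<in>{1..k}. s \<in> K (\<iota> j)}"

definition restrict_perm :: "(nat \<Rightarrow> nat) \<Rightarrow> nat set \<Rightarrow> nat \<Rightarrow> nat" where
  "restrict_perm \<sigma> J = (\<lambda>j. if j \<in> J then \<sigma> j else j)"

definition cycle_partition :: "(nat \<Rightarrow> nat) \<Rightarrow> nat set \<Rightarrow> nat set set" where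
  "cycle_partition f J = {{(f ^^ n) j | n. True} | j. j \<in> J}"

definition noncrossing_partition :: "nat set set \<Rightarrow> bool" where
  "noncrossing_partition P \<longleftrightarrow>
     (\<forall>B1\<in>P. \<forall>B2\<in>P. B1 \<noteq> B2 \<longrightarrow>
        \<not> (\<exists>a\<in>B1. \<exists>c\<in>B1. \<exists>b\<in>B2. \<exists>d\<in>B2. a < b \<and> b < c \<and> c < d))"

definition describes_noncrossing :: "(nat \<Rightarrow> nat) \<Rightarrow> nat set \<Rightarrow> bool" where
  "describes_noncrossing f J \<longleftrightarrow> noncrossing_partition (cycle_partition f J)"

end

theory Submission
  imports Defs
begin

lemma orb_in:
  assumes "\<sigma> \<in> S_tilde k \<iota>" and "x \<in> {1..k}"
  shows "(\<sigma>^^n) x \<in> {1..k} \<and> \<iota> ((\<sigma>^^n) x) = \<iota> x"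
proof (induction n)
  case 0 then show ?case using assms by simp
next
  case (Suc n)
  have p: "\<sigma> permutes {1..k}" and i: "\<forall>j\<in>{1..k}. \<iota> (\<sigma> j) = \<iota> j"
    using assms(1) by (auto simp: S_tilde_def)
  have "\<sigma> ((\<sigma>^^n) x) \<in> {1..k}" using Suc permutes_in_image[OF p] by simp
  then show ?case using Suc i by auto
qed

lemma orb_restr:
  assumes "\<sigma> \<in> S_tilde k \<iota>" and "x \<in> J_set K k \<iota> s"
  shows "(restrict_perm \<sigma> (J_set K k \<iota> s) ^^ n) x = (\<sigma>^^n) x \<and> (\<sigma>^^n) x \<in> J_set K k \<iota> s"
proof (induction n)
  case 0 then show ?case using assms by simp
next
  case (Suc n)
  have p: "\<sigma> permutes {1..k}" and i: "\<forall>j\<in>{1..k}. \<iota> (\<sigma> j) = \<iota> j"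
    using assms(1) by (auto simp: S_tilde_def)
  let ?y = "(\<sigma>^^n) x"
  have y: "?y \<in> {1..k}" "s \<in> K (\<iota> ?y)" using Suc by (auto simp: J_set_def)
  have "\<sigma> ?y \<in> {1..k}" using y permutes_in_image[OF p] by simp
  moreover have "\<iota> (\<sigma> ?y) = \<iota> ?y" using i y by auto
  ultimately have "\<sigma> ?y \<in> J_set K k \<iota> s" using y by (auto simp: J_set_def)
  then show ?case using Suc by (auto simp: restrict_perm_def)
qed

theorem mainTheorem4:
  fixes I :: "'i set" and S :: "'s set" and K :: "'i \<Rightarrow> 's set"
    and k :: nat and \<iota> :: "nat \<Rightarrow> 'i" and \<sigma> :: "nat \<Rightarrow> nat"
  assumes "finite S" and "S \<noteq> {}"
    and "\<forall>x\<in>I. K x \<noteq> {} \<and> K x \<subseteq> S"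
    and "k \<ge> 1"
    and "\<iota> \<in> I_eps I K k"
    and "\<sigma> \<in> S_tilde k \<iota>"
    and "\<forall>s\<in>S. describes_noncrossing (restrict_perm \<sigma> (J_set K k \<iota> s)) (J_set K k \<iota> s)"
  shows "\<exists>j\<in>{1..k}. \<sigma> j = j"
proof (rule ccontr)
  assume nf: "\<not> (\<exists>j\<in>{1..k}. \<sigma> j = j)"
  have p: "\<sigma> permutes {1..k}" and i: "\<forall>j\<in>{1..k}. \<iota> (\<sigma> j) = \<iota> j"
    using assms(6) by (auto simp: S_tilde_def)
  define R where "R a b \<longleftrightarrow> (\<exists>n. (\<sigma>^^n) a = b) \<or> (\<exists>n. (\<sigma>^^n) b = a)" for a b
  define P where "P d \<longleftrightarrow> (\<exists>a b. a < b \<and> a \<in> {1..k} \<and> b \<in> {1..k} \<and> b - a = d \<and> R a b)" for d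
  have s1: "\<sigma> 1 \<in> {1..k}" "\<sigma> 1 \<noteq> 1" using nf permutes_in_image[OF p] assms(4) by auto
  have "R 1 (\<sigma> 1)" unfolding R_def by (rule disjI1, rule exI[of _ 1]) simp
  hence "P (\<sigma> 1 - 1)" unfolding P_def using s1 assms(4) by (intro exI[of _ 1] exI[of _ "\<sigma> 1"]) auto
  hence "P (LEAST d. P d)" by (rule LeastI)
  then obtain j l where jl: "j < l" "j \<in> {1..k}" "l \<in> {1..k}" "R j l" and
    ld: "l - j = (LEAST d. P d)"
    unfolding P_def by blast
  have minim: "l - j \<le> b - a" if "a < b" "a \<in> {1..k}" "b \<in> {1..k}" "R a b" for a b
  proof -
    have "P (b - a)" unfolding P_def using that by blast
    hence "(LEAST d. P d) \<le> b - a" by (rule Least_le)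
    thus ?thesis using ld by simp
  qed
  have ijl: "\<iota> j = \<iota> l" using jl orb_in[OF assms(6)] unfolding R_def by metis
  have ieps: "\<forall>j l. 1 \<le> j \<and> j < l \<and> l \<le> k \<and> \<iota> j = \<iota> l \<longrightarrow>
        (\<exists>m. j < m \<and> m < l \<and> \<iota> m \<noteq> \<iota> j \<and> eps K (\<iota> j) (\<iota> m) = 0)"
    using assms(5) unfolding I_eps_def by simp
  have "1 \<le> j \<and> j < l \<and> l \<le> k \<and> \<iota> j = \<iota> l" using jl ijl by simp
  with ieps obtain m where m: "j < m" "m < l" "\<iota> m \<noteq> \<iota> j" "eps K (\<iota> j) (\<iota> m) = 0"
    by blast
  have mk: "m \<in> {1..k}" using m jl by auto
  obtain s where s: "s \<in> K (\<iota> j)" "s \<in> K (\<iota> m)" using m(4) unfolding eps_def by (auto split: if_splits)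
  have "\<iota> j \<in> I" using assms(5) jl unfolding I_eps_def by auto
  hence sS: "s \<in> S" using assms(3) s by auto
  define J where "J = J_set K k \<iota> s"
  define f where "f = restrict_perm \<sigma> J"
  have nc: "noncrossing_partition (cycle_partition f J)"
    using assms(7) sS unfolding J_def f_def describes_noncrossing_def by auto
  have jJ: "j \<in> J" and lJ: "l \<in> J" and mJ: "m \<in> J"
    using jl s mk ijl unfolding J_def J_set_def by auto
  have orb: "\<And>x n. x \<in> J \<Longrightarrow> (f^^n) x = (\<sigma>^^n) x"
    unfolding f_def J_def by (rule conjunct1[OF orb_restr[OF assms(6)]])
  define m' where "m' = \<sigma> m"
  have m'k: "m' \<in> {1..k}" "m' \<noteq> m" "\<iota> m' = \<iota> m"
    using mk nf permutes_in_image[OF p] i unfolding m'_def by auto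
  have Rmm: "R m m'" "R m' m" unfolding R_def m'_def
    by (rule disjI1, rule exI[of _ 1], simp) (rule disjI2, rule exI[of _ 1], simp)
  have m'out: "m' < j \<or> m' > l"
  proof (rule ccontr)
    assume "\<not> (m' < j \<or> m' > l)"
    hence "j \<le> m'" "m' \<le> l" by auto
    moreover have "m' \<noteq> j" "m' \<noteq> l" using m'k m ijl by auto
    ultimately have "j < m'" "m' < l" by auto
    show False
    proof (cases "m < m'")
      case True
      from minim[OF True mk m'k(1) Rmm(1)] show False using m \<open>m' < l\<close> by auto
    next
      case False
      hence "m' < m" using m'k by auto
      from minim[OF this m'k(1) mk Rmm(2)] show False using m \<open>j < m'\<close> by auto
    qed
  qed
  obtain x where x: "x \<in> {j, l}" "j \<in> {(f^^n) x | n. True}" "l \<in> {(f^^n) x | n. True}"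
  proof -
    from jl(4) show ?thesis unfolding R_def
    proof
      assume "\<exists>n. (\<sigma>^^n) j = l"
      then obtain n where "(\<sigma>^^n) j = l" by blast
      hence e1: "l = (f^^n) j" using orb[OF jJ, of n] by simp
      have e2: "j = (f^^0) j" by simp
      show ?thesis using that[of j] e1 e2 by blast
    next
      assume "\<exists>n. (\<sigma>^^n) l = j"
      then obtain n where "(\<sigma>^^n) l = j" by blast
      hence e1: "j = (f^^n) l" using orb[OF lJ, of n] by simp
      have e2: "l = (f^^0) l" by simp
      show ?thesis using that[of l] e1 e2 by blast
    qed
  qed
  define B1 where "B1 = {(f^^n) x | n. True}"
  define B2 where "B2 = {(f^^n) m | n. True}"
  have xJ: "x \<in> J" using x(1) jJ lJ by blast
  have B1: "B1 \<in> cycle_partition f J" unfolding B1_def cycle_partition_def by (rule CollectI, rule exI[of _ x]) (simp add: xJ)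
  have B2: "B2 \<in> cycle_partition f J" unfolding B2_def cycle_partition_def by (rule CollectI, rule exI[of _ m]) (simp add: mJ)
  have e0: "m = (f^^0) m" by simp
  have mB2: "m \<in> B2" unfolding B2_def using e0 by blast
  have e1: "m' = (f^^1) m" using orb[OF mJ, of 1] unfolding m'_def by simp
  have m'B2: "m' \<in> B2" unfolding B2_def using e1 by blast
  have xk: "x \<in> {1..k}" using x(1) jl(2,3) by blast
  have ix: "\<iota> x = \<iota> j" using x(1) ijl by auto
  have "m \<notin> B1"
  proof
    assume "m \<in> B1"
    then obtain n where "m = (f^^n) x" unfolding B1_def by blast
    hence "m = (\<sigma>^^n) x" using orb[OF xJ, of n] by simp
    thus False using orb_in[OF assms(6) xk, of n] ix m(3) by simp
  qed
  hence ne: "B1 \<noteq> B2" using mB2 by blast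
  have jB1: "j \<in> B1" using x(2) unfolding B1_def .
  have lB1: "l \<in> B1" using x(3) unfolding B1_def .
  have NC: "\<And>B C a b c d. B \<in> cycle_partition f J \<Longrightarrow> C \<in> cycle_partition f J \<Longrightarrow> B \<noteq> C
     \<Longrightarrow> a \<in> B \<Longrightarrow> c \<in> B \<Longrightarrow> b \<in> C \<Longrightarrow> d \<in> C \<Longrightarrow> a < b \<Longrightarrow> b < c \<Longrightarrow> c < d \<Longrightarrow> False"
  proof -
    fix B C a b c d
    assume h: "B \<in> cycle_partition f J" "C \<in> cycle_partition f J" "B \<noteq> C"
      "a \<in> B" "c \<in> B" "b \<in> C" "d \<in> C" "a < b" "b < c" "c < d"
    have nc': "\<forall>B1\<in>cycle_partition f J. \<forall>B2\<in>cycle_partition f J. B1 \<noteq> B2 \<longrightarrow>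
        \<not> (\<exists>a\<in>B1. \<exists>c\<in>B1. \<exists>b\<in>B2. \<exists>d\<in>B2. a < b \<and> b < c \<and> c < d)"
      using nc unfolding noncrossing_partition_def .
    have "\<not> (\<exists>a\<in>B. \<exists>c\<in>B. \<exists>b\<in>C. \<exists>d\<in>C. a < b \<and> b < c \<and> c < d)"
      using nc'[rule_format, OF h(1) h(2) h(3)] .
    moreover have "\<exists>a\<in>B. \<exists>c\<in>B. \<exists>b\<in>C. \<exists>d\<in>C. a < b \<and> b < c \<and> c < d"
      using h(4-10) by blast
    ultimately show False by contradiction
  qed
  show False
  proof (cases "m' > l")
    case True
    show False by (rule NC[OF B1 B2 ne jB1 lB1 mB2 m'B2 m(1) m(2) True])
  next
    case False
    hence "m' < j" using m'out by auto
    show False by (rule NC[OF B2 B1 ne[symmetric] m'B2 mB2 jB1 lB1 \<open>m' < j\<close> m(1) m(2)])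
  qed
qed

end
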